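(* If $Q$ is a quadrilateral in $K^2$ in standard form, then the centroid of $Q$ is the origin if and only if the vertices of $Q$ are the vertices of a parallelogram.
   Context: $K$ is a field of characteristic $\neq 2$. A quadrilateral $Q=ABA'B'$ consists of four distinct lines $A,B,A',B'$ (sides) in $K^2$, not all through one point, with adjacent sides ($A,B$; $B,A'$; $A',B'$; $B',A$) not parallel; opposite sides may be parallel. Vertices: $A\cap B$, $B\cap A'$, $A'\cap B'$, $B'\cap A$ (two may coincide if three sides are concurrent). The centroid is the average of the four vertices (equivalently the midpoint of the midpoints of the diagonals). $Q$ is in standard form if $A$ is the line $Y=0$ and $A'$ is the line $X=0$. A parallelogram is a quadrilateral whose pairs of opposite sides are parallel. *)

theory Defs
  imports Main
begin

definition is_line :: "('a::field \<times> 'a) set \<Rightarrow> bool" where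
  "is_line L \<longleftrightarrow> (\<exists>a b c. (a \<noteq> 0 \<or> b \<noteq> 0) \<and> L = {p. a * fst p + b * snd p = c})"

definition parallel :: "('a::field \<times> 'a) set \<Rightarrow> ('a \<times> 'a) set \<Rightarrow> bool" where
  "parallel L M \<longleftrightarrow> L = M \<or> L \<inter> M = {}"

text \<open>Quadrilateral Q = A B A' B' (sides in cyclic order).\<close>
definition quadrilateral ::
  "('a::field \<times> 'a) set \<Rightarrow> ('a \<times> 'a) set \<Rightarrow> ('a \<times> 'a) set \<Rightarrow> ('a \<times> 'a) set \<Rightarrow> bool" where
  "quadrilateral A B A' B' \<longleftrightarrow>
     is_line A \<and> is_line B \<and> is_line A' \<and> is_line B' \<and>
     distinct [A, B, A', B'] \<and>
     A \<inter> B \<inter> A' \<inter> B' = {} \<and>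
     \<not> parallel A B \<and> \<not> parallel B A' \<and> \<not> parallel A' B' \<and> \<not> parallel B' A"

definition meet :: "('a \<times> 'a) set \<Rightarrow> ('a \<times> 'a) set \<Rightarrow> 'a \<times> 'a" where
  "meet L M = (THE p. p \<in> L \<inter> M)"

definition quad_vertices ::
  "('a::field \<times> 'a) set \<Rightarrow> ('a \<times> 'a) set \<Rightarrow> ('a \<times> 'a) set \<Rightarrow> ('a \<times> 'a) set \<Rightarrow> ('a \<times> 'a) list" where
  "quad_vertices A B A' B' = [meet A B, meet B A', meet A' B', meet B' A]"

definition centroid ::
  "('a::field \<times> 'a) set \<Rightarrow> ('a \<times> 'a) set \<Rightarrow> ('a \<times> 'a) set \<Rightarrow> ('a \<times> 'a) set \<Rightarrow> 'a \<times> 'a" where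
  "centroid A B A' B' =
     (let vs = quad_vertices A B A' B' in
       (sum_list (map fst vs) / 4, sum_list (map snd vs) / 4))"

definition standard_form ::
  "('a::field \<times> 'a) set \<Rightarrow> ('a \<times> 'a) set \<Rightarrow> ('a \<times> 'a) set \<Rightarrow> ('a \<times> 'a) set \<Rightarrow> bool" where
  "standard_form A B A' B' \<longleftrightarrow>
     quadrilateral A B A' B' \<and> A = {p. snd p = 0} \<and> A' = {p. fst p = 0}"

definition parallelogram ::
  "('a::field \<times> 'a) set \<Rightarrow> ('a \<times> 'a) set \<Rightarrow> ('a \<times> 'a) set \<Rightarrow> ('a \<times> 'a) set \<Rightarrow> bool" where
  "parallelogram A B A' B' \<longleftrightarrow>
     quadrilateral A B A' B' \<and> parallel A A' \<and> parallel B B'"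

end

theory Submission
  imports Defs
begin

lemma orth:
  fixes a1 b1 a2 b2 x y :: "'a::field"
  assumes "a1 \<noteq> 0 \<or> b1 \<noteq> 0" "a1*b2 = a2*b1" "a1*x+b1*y = 0"
  shows "a2*x+b2*y = 0"
proof (cases "a1 = 0")
  case True
  then have "b1 \<noteq> 0" using assms(1) by simp
  then have "y = 0" "a2 = 0" using assms True by auto
  then show ?thesis by simp
next
  case False
  have "a1*(a2*x+b2*y) = a2*(a1*x+b1*y) + (a1*b2 - a2*b1)*y" by (simp add: algebra_simps)
  also have "\<dots> = 0" using assms by simp
  finally show ?thesis using False by simp
qed

lemma det0:
  fixes a1 b1 a2 b2 x y :: "'a::field"
  assumes "a1*x+b1*y = 0" "a2*x+b2*y = 0" "x \<noteq> 0 \<or> y \<noteq> 0"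
  shows "a1*b2 = a2*b1"
proof -
  have e1: "(a1*b2-a2*b1)*x = b2*(a1*x+b1*y) - b1*(a2*x+b2*y)" by (simp add: algebra_simps)
  have e2: "(a1*b2-a2*b1)*y = a1*(a2*x+b2*y) - a2*(a1*x+b1*y)" by (simp add: algebra_simps)
  have "(a1*b2-a2*b1)*x = 0" "(a1*b2-a2*b1)*y = 0" using e1 e2 assms by simp_all
  then show ?thesis using assms(3) by auto
qed

lemma solve:
  fixes a1 b1 a2 b2 c1 c2 :: "'a::field"
  assumes "a1*b2 \<noteq> a2*b1"
  shows "\<exists>x y. a1*x+b1*y = c1 \<and> a2*x+b2*y = c2"
proof -
  have d: "a1*b2 - a2*b1 \<noteq> 0" using assms by simp
  define D where "D = a1*b2 - a2*b1"
  have D: "D \<noteq> 0" using d D_def by simp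
  have e1: "a1*((c1*b2 - c2*b1)/D) + b1*((a1*c2 - a2*c1)/D) = (c1*D)/D"
    unfolding times_divide_eq_right add_divide_distrib[symmetric] D_def by (simp add: algebra_simps)
  have e2: "a2*((c1*b2 - c2*b1)/D) + b2*((a1*c2 - a2*c1)/D) = (c2*D)/D"
    unfolding times_divide_eq_right add_divide_distrib[symmetric] D_def by (simp add: algebra_simps)
  show ?thesis using e1 e2 D by (intro exI[of _ "(c1*b2 - c2*b1)/D"] exI[of _ "(a1*c2 - a2*c1)/D"]) simp
qed

lemma line_eq:
  fixes a1 b1 c1 a2 b2 c2 :: "'a::field"
  assumes L: "L = {p. a1*fst p + b1*snd p = c1}" and M: "M = {p. a2*fst p + b2*snd p = c2}"
    and n1: "a1 \<noteq> 0 \<or> b1 \<noteq> 0" and n2: "a2 \<noteq> 0 \<or> b2 \<noteq> 0"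
    and d: "a1*b2 = a2*b1" and p: "p \<in> L" "p \<in> M"
  shows "L = M"
proof -
  have c1: "c1 = a1*fst p + b1*snd p" and c2: "c2 = a2*fst p + b2*snd p" using p L M by auto
  have "r \<in> L \<longleftrightarrow> r \<in> M" for r
  proof -
    have "r \<in> L \<longleftrightarrow> a1*(fst r - fst p) + b1*(snd r - snd p) = 0"
      using L c1 by (auto simp: algebra_simps)
    moreover have "r \<in> M \<longleftrightarrow> a2*(fst r - fst p) + b2*(snd r - snd p) = 0"
      using M c2 by (auto simp: algebra_simps)
    moreover have "a2*b1 = a1*b2" using d by simp
    ultimately show ?thesis using orth[OF n1 d] orth[OF n2] by blast
  qed
  then show ?thesis by blast
qed

lemma nonpar_det:
  fixes a1 b1 c1 a2 b2 c2 :: "'a::field"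
  assumes L: "L = {p. a1*fst p + b1*snd p = c1}" and M: "M = {p. a2*fst p + b2*snd p = c2}"
    and n1: "a1 \<noteq> 0 \<or> b1 \<noteq> 0" and n2: "a2 \<noteq> 0 \<or> b2 \<noteq> 0"
    and np: "\<not> parallel L M"
  shows "a1*b2 \<noteq> a2*b1"
proof
  assume d: "a1*b2 = a2*b1"
  from np obtain p where "p \<in> L" "p \<in> M" unfolding parallel_def by blast
  then have "L = M" using line_eq[OF L M n1 n2 d] by blast
  then show False using np unfolding parallel_def by simp
qed

lemma par_det:
  fixes a1 b1 c1 a2 b2 c2 :: "'a::field"
  assumes L: "L = {p. a1*fst p + b1*snd p = c1}" and M: "M = {p. a2*fst p + b2*snd p = c2}"
    and pa: "parallel L M" and ne: "L \<noteq> M"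
  shows "a1*b2 = a2*b1"
proof (rule ccontr)
  assume "a1*b2 \<noteq> a2*b1"
  then obtain x y where "a1*x+b1*y = c1 \<and> a2*x+b2*y = c2" using solve by blast
  then have "(x,y) \<in> L \<inter> M" using L M by simp
  then show False using pa ne unfolding parallel_def by blast
qed

lemma meet_unique:
  fixes L M :: "('a::field \<times> 'a) set"
  assumes "is_line L" "is_line M" "\<not> parallel L M"
  shows "L \<inter> M = {meet L M}"
proof -
  obtain a1 b1 c1 where n1: "a1 \<noteq> 0 \<or> b1 \<noteq> 0" and L: "L = {p. a1*fst p + b1*snd p = c1}"
    using assms(1) unfolding is_line_def by blast
  obtain a2 b2 c2 where n2: "a2 \<noteq> 0 \<or> b2 \<noteq> 0" and M: "M = {p. a2*fst p + b2*snd p = c2}"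
    using assms(2) unfolding is_line_def by blast
  have d: "a1*b2 \<noteq> a2*b1" using nonpar_det[OF L M n1 n2 assms(3)] .
  from assms(3) obtain p where p: "p \<in> L \<inter> M" unfolding parallel_def by blast
  have u: "q = p" if "q \<in> L \<inter> M" for q
  proof (rule ccontr)
    assume "q \<noteq> p"
    then have "fst q - fst p \<noteq> 0 \<or> snd q - snd p \<noteq> 0" by (auto simp: prod_eq_iff)
    moreover have "a1*(fst q - fst p) + b1*(snd q - snd p) = 0"
      using p that L by (auto simp: algebra_simps)
    moreover have "a2*(fst q - fst p) + b2*(snd q - snd p) = 0"
      using p that M by (auto simp: algebra_simps)
    ultimately show False using det0 d by blast
  qed
  have "meet L M = p" unfolding meet_def using p u by (rule the_equality)
  then show ?thesis using p u by blast
qed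


lemma line_rep:
  assumes "is_line (L::('a::field \<times> 'a) set)"
  obtains a b c where "a \<noteq> 0 \<or> b \<noteq> 0" "L = {p. a*fst p + b*snd p = c}"
  using assms unfolding is_line_def by blast

lemma pgram:
  fixes P1 P2 P3 P4 :: "('a::field \<times> 'a) set"
  assumes pg: "parallelogram P1 P2 P3 P4"
  defines "v1 \<equiv> meet P1 P2" and "v2 \<equiv> meet P2 P3" and "v3 \<equiv> meet P3 P4" and "v4 \<equiv> meet P4 P1"
  shows "fst v1 + fst v3 = fst v2 + fst v4 \<and> snd v1 + snd v3 = snd v2 + snd v4
    \<and> distinct [v1, v2, v3, v4]"
proof -
  have q: "quadrilateral P1 P2 P3 P4" and p13: "parallel P1 P3" and p24: "parallel P2 P4"
    using pg unfolding parallelogram_def by auto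
  have l: "is_line P1" "is_line P2" "is_line P3" "is_line P4" and ds: "distinct [P1,P2,P3,P4]"
    and np: "\<not> parallel P1 P2" "\<not> parallel P2 P3" "\<not> parallel P3 P4" "\<not> parallel P4 P1"
    using q unfolding quadrilateral_def by auto
  have m1: "v1 \<in> P1" "v1 \<in> P2" using meet_unique[OF l(1) l(2) np(1)] v1_def by auto
  have m2: "v2 \<in> P2" "v2 \<in> P3" using meet_unique[OF l(2) l(3) np(2)] v2_def by auto
  have m3: "v3 \<in> P3" "v3 \<in> P4" using meet_unique[OF l(3) l(4) np(3)] v3_def by auto
  have m4: "v4 \<in> P4" "v4 \<in> P1" using meet_unique[OF l(4) l(1) np(4)] v4_def by auto
  have d13: "P1 \<inter> P3 = {}" and d24: "P2 \<inter> P4 = {}" using p13 p24 ds unfolding parallel_def by auto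
  have dist: "distinct [v1, v2, v3, v4]" using m1 m2 m3 m4 d13 d24 by auto
  obtain a1 b1 c1 where n1: "a1 \<noteq> 0 \<or> b1 \<noteq> 0" and L1: "P1 = {p. a1*fst p + b1*snd p = c1}"
    using l(1) by (rule line_rep)
  obtain a2 b2 c2 where n2: "a2 \<noteq> 0 \<or> b2 \<noteq> 0" and L2: "P2 = {p. a2*fst p + b2*snd p = c2}"
    using l(2) by (rule line_rep)
  obtain a3 b3 c3 where n3: "a3 \<noteq> 0 \<or> b3 \<noteq> 0" and L3: "P3 = {p. a3*fst p + b3*snd p = c3}"
    using l(3) by (rule line_rep)
  obtain a4 b4 c4 where n4: "a4 \<noteq> 0 \<or> b4 \<noteq> 0" and L4: "P4 = {p. a4*fst p + b4*snd p = c4}"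
    using l(4) by (rule line_rep)
  have det13: "a3*b1 = a1*b3" using par_det[OF L1 L3 p13] ds by auto
  have det24: "a4*b2 = a2*b4" using par_det[OF L2 L4 p24] ds by auto
  have det12: "a1*b2 \<noteq> a2*b1" using nonpar_det[OF L1 L2 n1 n2 np(1)] .
  have e1: "a1*(fst v1 - fst v4) + b1*(snd v1 - snd v4) = 0" using m1 m4 L1 by (auto simp: algebra_simps)
  have e3: "a3*(fst v2 - fst v3) + b3*(snd v2 - snd v3) = 0" using m2 m3 L3 by (auto simp: algebra_simps)
  have e2: "a2*(fst v1 - fst v2) + b2*(snd v1 - snd v2) = 0" using m1 m2 L2 by (auto simp: algebra_simps)
  have e4: "a4*(fst v4 - fst v3) + b4*(snd v4 - snd v3) = 0" using m3 m4 L4 by (auto simp: algebra_simps)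
  have h1: "a1*(fst v2 - fst v3) + b1*(snd v2 - snd v3) = 0" using orth[OF n3 det13 e3] .
  have h2: "a2*(fst v4 - fst v3) + b2*(snd v4 - snd v3) = 0" using orth[OF n4 det24 e4] .
  have w1: "a1*(fst v1 - fst v2 - fst v4 + fst v3) + b1*(snd v1 - snd v2 - snd v4 + snd v3) = 0"
  proof -
    have "a1*(fst v1 - fst v2 - fst v4 + fst v3) + b1*(snd v1 - snd v2 - snd v4 + snd v3)
      = (a1*(fst v1 - fst v4) + b1*(snd v1 - snd v4)) - (a1*(fst v2 - fst v3) + b1*(snd v2 - snd v3))"
      by (simp add: algebra_simps)
    then show ?thesis using e1 h1 by simp
  qed
  have w2: "a2*(fst v1 - fst v2 - fst v4 + fst v3) + b2*(snd v1 - snd v2 - snd v4 + snd v3) = 0"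
  proof -
    have "a2*(fst v1 - fst v2 - fst v4 + fst v3) + b2*(snd v1 - snd v2 - snd v4 + snd v3)
      = (a2*(fst v1 - fst v2) + b2*(snd v1 - snd v2)) - (a2*(fst v4 - fst v3) + b2*(snd v4 - snd v3))"
      by (simp add: algebra_simps)
    then show ?thesis using e2 h2 by simp
  qed
  have "fst v1 - fst v2 - fst v4 + fst v3 = 0 \<and> snd v1 - snd v2 - snd v4 + snd v3 = 0"
    using det0[OF w1 w2] det12 by blast
  then show ?thesis using dist by (simp add: algebra_simps)
qed


definition lin :: "'a::field \<Rightarrow> 'a \<Rightarrow> ('a \<times> 'a) set" where
  "lin a b = {p. a*fst p + b*snd p = 1}"

lemma lin_line: "a \<noteq> 0 \<Longrightarrow> is_line (lin a b)"
  unfolding is_line_def lin_def by blast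

lemma lin_eq_a: "lin a b = lin c d \<Longrightarrow> (a::'a::field) \<noteq> 0 \<Longrightarrow> a = c"
proof -
  assume e: "lin a b = lin c d" and a: "a \<noteq> 0"
  have "(1/a, 0) \<in> lin a b" using a by (simp add: lin_def)
  then have "(1/a, 0) \<in> lin c d" using e by simp
  then have "c * (1/a) = 1" by (simp add: lin_def)
  then show "a = c" using a by (simp add: field_simps)
qed

lemma lin_eq_b: "lin a b = lin c d \<Longrightarrow> (b::'a::field) \<noteq> 0 \<Longrightarrow> b = d"
proof -
  assume e: "lin a b = lin c d" and a: "b \<noteq> 0"
  have "(0, 1/b) \<in> lin a b" using a by (simp add: lin_def)
  then have "(0, 1/b) \<in> lin c d" using e by simp
  then have "d * (1/b) = 1" by (simp add: lin_def)
  then show "b = d" using a by (simp add: field_simps)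
qed

lemma lin_opp: "(2::'a::field) \<noteq> 0 \<Longrightarrow> lin (a::'a) b \<inter> lin (-a) (-b) = {}"
proof (rule ccontr)
  assume t: "(2::'a) \<noteq> 0" and "lin a b \<inter> lin (-a) (-b) \<noteq> {}"
  then obtain p where "a*fst p + b*snd p = 1" "-a*fst p + -b*snd p = 1" unfolding lin_def by auto
  then have "(a*fst p + b*snd p) + (-a*fst p + -b*snd p) = (2::'a)" by simp
  then have "(2::'a) = 0" by (simp add: algebra_simps)
  then show False using t by simp
qed

lemma meet_lin:
  fixes a b c d :: "'a::field"
  assumes "a*d \<noteq> c*b" "a*fst p + b*snd p = 1" "c*fst p + d*snd p = 1"
  shows "meet (lin a b) (lin c d) = p"
  unfolding meet_def
proof (rule the_equality)
  show "p \<in> lin a b \<inter> lin c d" using assms by (simp add: lin_def)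
  fix q assume q: "q \<in> lin a b \<inter> lin c d"
  show "q = p"
  proof (rule ccontr)
    assume "q \<noteq> p"
    then have "fst q - fst p \<noteq> 0 \<or> snd q - snd p \<noteq> 0" by (auto simp: prod_eq_iff)
    moreover have "a*(fst q - fst p) + b*(snd q - snd p) = 0"
      using assms q by (auto simp: algebra_simps lin_def)
    moreover have "c*(fst q - fst p) + d*(snd q - snd p) = 0"
      using assms q by (auto simp: algebra_simps lin_def)
    ultimately show False using det0 assms(1) by blast
  qed
qed

lemma two_ne: "(2::'a::field) \<noteq> 0 \<Longrightarrow> (u::'a) \<noteq> 0 \<Longrightarrow> u \<noteq> - u"
proof
  assume "(2::'a) \<noteq> 0" "u \<noteq> 0" "u = -u"
  then have "2*u = 0" by (simp add: algebra_simps)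
  then show False using \<open>(2::'a) \<noteq> 0\<close> \<open>u \<noteq> 0\<close> by simp
qed

lemma distinct4: "distinct [a,b,c,d] \<longleftrightarrow> a \<noteq> b \<and> a \<noteq> c \<and> a \<noteq> d \<and> b \<noteq> c \<and> b \<noteq> d \<and> c \<noteq> d"
  by auto

lemma rhombus:
  fixes u v :: "'a::field"
  assumes t: "(2::'a) \<noteq> 0" and u: "u \<noteq> 0" and v: "v \<noteq> 0"
  shows "parallelogram (lin u v) (lin (-u) v) (lin (-u) (-v)) (lin u (-v)) \<and>
    quad_vertices (lin u v) (lin (-u) v) (lin (-u) (-v)) (lin u (-v)) = [(0,1/v),(-1/u,0),(0,-1/v),(1/u,0)]"
proof -
  have uu: "u \<noteq> -u" and vv: "v \<noteq> -v" using two_ne t u v by auto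
  have uv: "u*v \<noteq> -(u*v)" using two_ne[OF t] u v by simp
  have m1: "meet (lin u v) (lin (-u) v) = (0,1/v)" by (rule meet_lin) (use uv v in auto)
  have m2: "meet (lin (-u) v) (lin (-u) (-v)) = (-1/u,0)" by (rule meet_lin) (use uv u in auto)
  have m3: "meet (lin (-u) (-v)) (lin u (-v)) = (0,-1/v)" by (rule meet_lin) (use uv v in auto)
  have m4: "meet (lin u (-v)) (lin u v) = (1/u,0)" by (rule meet_lin) (use uv u in auto)
  have ne12: "lin u v \<noteq> lin (-u) v" using lin_eq_a u uu by blast
  have ne13: "lin u v \<noteq> lin (-u) (-v)" using lin_eq_a u uu by blast
  have ne14: "lin u v \<noteq> lin u (-v)" using lin_eq_b v vv by blast
  have ne23: "lin (-u) v \<noteq> lin (-u) (-v)" using lin_eq_b v vv by blast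
  have ne24: "lin (-u) v \<noteq> lin u (-v)" using lin_eq_b v vv by blast
  have ne34: "lin (-u) (-v) \<noteq> lin u (-v)" using lin_eq_a u uu by blast
  have i12: "(0,1/v) \<in> lin u v \<inter> lin (-u) v" using v by (simp add: lin_def)
  have i23: "(-1/u,0) \<in> lin (-u) v \<inter> lin (-u) (-v)" using u by (simp add: lin_def)
  have i34: "(0,-1/v) \<in> lin (-u) (-v) \<inter> lin u (-v)" using v by (simp add: lin_def)
  have i41: "(1/u,0) \<in> lin u (-v) \<inter> lin u v" using u by (simp add: lin_def)
  have d13: "lin u v \<inter> lin (-u) (-v) = {}" using lin_opp[OF t] .
  have d24: "lin (-u) v \<inter> lin u (-v) = {}" using lin_opp[OF t, of "-u" v] by simp
  have dd: "distinct [lin u v, lin (-u) v, lin (-u) (-v), lin u (-v)]"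
    using distinct4[of "lin u v" "lin (-u) v" "lin (-u) (-v)" "lin u (-v)"] ne12 ne13 ne14 ne23 ne24 ne34
    by blast
  have np: "\<not> parallel (lin u v) (lin (-u) v)" "\<not> parallel (lin (-u) v) (lin (-u) (-v))"
    "\<not> parallel (lin (-u) (-v)) (lin u (-v))" "\<not> parallel (lin u (-v)) (lin u v)"
    unfolding parallel_def using ne12 ne23 ne34 ne14 i12 i23 i34 i41 by blast+
  have e4: "lin u v \<inter> lin (-u) v \<inter> lin (-u) (-v) \<inter> lin u (-v) = {}" using d13 by blast
  have ll: "is_line (lin u v)" "is_line (lin (-u) v)" "is_line (lin (-u) (-v))" "is_line (lin u (-v))"
    using lin_line[of u] lin_line[of "-u"] u by auto
  have "quadrilateral (lin u v) (lin (-u) v) (lin (-u) (-v)) (lin u (-v))"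
    unfolding quadrilateral_def using dd np e4 ll by blast
  moreover have "parallel (lin u v) (lin (-u) (-v))" "parallel (lin (-u) v) (lin u (-v))"
    unfolding parallel_def using d13 d24 by auto
  ultimately show ?thesis unfolding parallelogram_def quad_vertices_def using m1 m2 m3 m4 by simp
qed


lemma comb:
  fixes x1 x2 y1 y2 :: "'a::field"
  assumes dv: "distinct [v1,v2,v3,v4]"
    and st: "set [(x1,0),(0,y1),(0,y2),(x2,0)] = set [v1,v2,v3,v4]"
    and s1: "fst v1 + fst v3 = fst v2 + fst v4" and s2: "snd v1 + snd v3 = snd v2 + snd v4"
  shows "x1 + x2 = 0 \<and> y1 + y2 = 0"
proof -
  let ?qs = "[(x1,0),(0,y1),(0,y2),(x2,(0::'a))]"
  have "card (set ?qs) = 4" using st distinct_card[OF dv] by simp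
  then have dq: "distinct ?qs"
    by (intro card_distinct) simp
  have "sum fst (set ?qs) = sum fst (set [v1,v2,v3,v4])" using st by simp
  then have ex: "x1 + x2 = 2*(fst v1 + fst v3)"
    using sum.distinct_set_conv_list[OF dq, of fst] sum.distinct_set_conv_list[OF dv, of fst] s1
    by (simp add: algebra_simps mult_2)
  have "sum snd (set ?qs) = sum snd (set [v1,v2,v3,v4])" using st by simp
  then have ey: "y1 + y2 = 2*(snd v1 + snd v3)"
    using sum.distinct_set_conv_list[OF dq, of snd] sum.distinct_set_conv_list[OF dv, of snd] s2
    by (simp add: algebra_simps mult_2)
  have m1: "v1 \<in> set ?qs" and m3: "v3 \<in> set ?qs" using st by auto
  have n13: "v1 \<noteq> v3" using dv by simp
  have H1: "\<And>a b::'a. a + b = 2*(a+0) \<Longrightarrow> b = a" by (metis add.right_neutral add_left_cancel mult_2)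
  have H2: "\<And>a b::'a. a + b = 2*(0+b) \<Longrightarrow> a = b" by (metis add.left_neutral add_right_cancel mult_2)
  have H2': "\<And>a b::'a. a + b = 2*(b+0) \<Longrightarrow> a = b" by (metis add.right_neutral add_right_cancel mult_2)
  have H1': "\<And>a b::'a. a + b = 2*(0+a) \<Longrightarrow> b = a" by (metis add.left_neutral add_left_cancel mult_2)
  have H3: "\<And>a b::'a. a + b = 2*(a+b) \<Longrightarrow> a+b = 0" by (metis add_cancel_right_right mult_2)
  have H3': "\<And>a b::'a. a + b = 2*(b+a) \<Longrightarrow> a+b = 0" by (metis add.commute add_cancel_right_right mult_2)
  have H4: "\<And>a b::'a. a + b = 2*(0+0) \<Longrightarrow> a+b = 0" by simp
  have dy: "y1 \<noteq> y2" using dq by auto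
  have c1: "v1 = (x1,0) \<or> v1 = (0,y1) \<or> v1 = (0,y2) \<or> v1 = (x2,0)" using m1 by simp
  have c3: "v3 = (x1,0) \<or> v3 = (0,y1) \<or> v3 = (0,y2) \<or> v3 = (x2,0)" using m3 by simp
  have k12: "v1 = (x1,0) \<Longrightarrow> v3 = (0,y1) \<Longrightarrow> ?thesis"
  proof -
    assume a: "v1 = (x1,0)" "v3 = (0,y1)"
    have hx: "x1 + x2 = 2*(x1 + 0)" and hy: "y1 + y2 = 2*(0 + y1)"
      using ex ey a by simp_all
    show ?thesis using H1'[OF hy] dy by simp
  qed
  have k13: "v1 = (x1,0) \<Longrightarrow> v3 = (0,y2) \<Longrightarrow> ?thesis"
  proof -
    assume a: "v1 = (x1,0)" "v3 = (0,y2)"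
    have hx: "x1 + x2 = 2*(x1 + 0)" and hy: "y1 + y2 = 2*(0 + y2)"
      using ex ey a by simp_all
    show ?thesis using H2[OF hy] dy by simp
  qed
  have k14: "v1 = (x1,0) \<Longrightarrow> v3 = (x2,0) \<Longrightarrow> ?thesis"
  proof -
    assume a: "v1 = (x1,0)" "v3 = (x2,0)"
    have hx: "x1 + x2 = 2*(x1 + x2)" and hy: "y1 + y2 = 2*(0 + 0)"
      using ex ey a by simp_all
    show ?thesis using H3[OF hx] H4[OF hy] by simp
  qed
  have k21: "v1 = (0,y1) \<Longrightarrow> v3 = (x1,0) \<Longrightarrow> ?thesis"
  proof -
    assume a: "v1 = (0,y1)" "v3 = (x1,0)"
    have hx: "x1 + x2 = 2*(0 + x1)" and hy: "y1 + y2 = 2*(y1 + 0)"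
      using ex ey a by simp_all
    show ?thesis using H1[OF hy] dy by simp
  qed
  have k23: "v1 = (0,y1) \<Longrightarrow> v3 = (0,y2) \<Longrightarrow> ?thesis"
  proof -
    assume a: "v1 = (0,y1)" "v3 = (0,y2)"
    have hx: "x1 + x2 = 2*(0 + 0)" and hy: "y1 + y2 = 2*(y1 + y2)"
      using ex ey a by simp_all
    show ?thesis using H4[OF hx] H3[OF hy] by simp
  qed
  have k24: "v1 = (0,y1) \<Longrightarrow> v3 = (x2,0) \<Longrightarrow> ?thesis"
  proof -
    assume a: "v1 = (0,y1)" "v3 = (x2,0)"
    have hx: "x1 + x2 = 2*(0 + x2)" and hy: "y1 + y2 = 2*(y1 + 0)"
      using ex ey a by simp_all
    show ?thesis using H1[OF hy] dy by simp
  qed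
  have k31: "v1 = (0,y2) \<Longrightarrow> v3 = (x1,0) \<Longrightarrow> ?thesis"
  proof -
    assume a: "v1 = (0,y2)" "v3 = (x1,0)"
    have hx: "x1 + x2 = 2*(0 + x1)" and hy: "y1 + y2 = 2*(y2 + 0)"
      using ex ey a by simp_all
    show ?thesis using H2'[OF hy] dy by simp
  qed
  have k32: "v1 = (0,y2) \<Longrightarrow> v3 = (0,y1) \<Longrightarrow> ?thesis"
  proof -
    assume a: "v1 = (0,y2)" "v3 = (0,y1)"
    have hx: "x1 + x2 = 2*(0 + 0)" and hy: "y1 + y2 = 2*(y2 + y1)"
      using ex ey a by (simp_all add: ac_simps)
    show ?thesis using H4[OF hx] H3'[OF hy] by (simp add: add.commute)
  qed
  have k34: "v1 = (0,y2) \<Longrightarrow> v3 = (x2,0) \<Longrightarrow> ?thesis"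
  proof -
    assume a: "v1 = (0,y2)" "v3 = (x2,0)"
    have hx: "x1 + x2 = 2*(0 + x2)" and hy: "y1 + y2 = 2*(y2 + 0)"
      using ex ey a by simp_all
    show ?thesis using H2'[OF hy] dy by simp
  qed
  have k41: "v1 = (x2,0) \<Longrightarrow> v3 = (x1,0) \<Longrightarrow> ?thesis"
  proof -
    assume a: "v1 = (x2,0)" "v3 = (x1,0)"
    have hx: "x1 + x2 = 2*(x2 + x1)" and hy: "y1 + y2 = 2*(0 + 0)"
      using ex ey a by (simp_all add: ac_simps)
    show ?thesis using H3'[OF hx] H4[OF hy] by simp
  qed
  have k42: "v1 = (x2,0) \<Longrightarrow> v3 = (0,y1) \<Longrightarrow> ?thesis"
  proof -
    assume a: "v1 = (x2,0)" "v3 = (0,y1)"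
    have hx: "x1 + x2 = 2*(x2 + 0)" and hy: "y1 + y2 = 2*(0 + y1)"
      using ex ey a by simp_all
    show ?thesis using H1'[OF hy] dy by simp
  qed
  have k43: "v1 = (x2,0) \<Longrightarrow> v3 = (0,y2) \<Longrightarrow> ?thesis"
  proof -
    assume a: "v1 = (x2,0)" "v3 = (0,y2)"
    have hx: "x1 + x2 = 2*(x2 + 0)" and hy: "y1 + y2 = 2*(0 + y2)"
      using ex ey a by simp_all
    show ?thesis using H2[OF hy] dy by simp
  qed
  have r1: "v1 = (x1,0) \<Longrightarrow> ?thesis"
  proof -
    assume a: "v1 = (x1,0)"
    then have "v3 \<noteq> (x1,0)" using n13 by simp
    then show ?thesis using c3 a k12 k13 k14 by blast
  qed
  have r2: "v1 = (0,y1) \<Longrightarrow> ?thesis"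
  proof -
    assume a: "v1 = (0,y1)"
    then have "v3 \<noteq> (0,y1)" using n13 by simp
    then show ?thesis using c3 a k21 k23 k24 by blast
  qed
  have r3: "v1 = (0,y2) \<Longrightarrow> ?thesis"
  proof -
    assume a: "v1 = (0,y2)"
    then have "v3 \<noteq> (0,y2)" using n13 by simp
    then show ?thesis using c3 a k31 k32 k34 by blast
  qed
  have r4: "v1 = (x2,0) \<Longrightarrow> ?thesis"
  proof -
    assume a: "v1 = (x2,0)"
    then have "v3 \<noteq> (x2,0)" using n13 by simp
    then show ?thesis using c3 a k41 k42 k43 by blast
  qed
  show ?thesis using c1 r1 r2 r3 r4 by blast
qed

theorem corollary4p5:
  fixes A B A' B' :: "('a::field \<times> 'a) set"
  assumes char: "(2::'a) \<noteq> 0"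
    and std: "standard_form A B A' B'"
  shows "centroid A B A' B' = (0, 0) \<longleftrightarrow>
    (\<exists>P1 P2 P3 P4 :: ('a \<times> 'a) set. parallelogram P1 P2 P3 P4 \<and>
        set (quad_vertices A B A' B') = set (quad_vertices P1 P2 P3 P4))"
proof -
  have q: "quadrilateral A B A' B'" and hA: "A = {p. snd p = 0}" and hA': "A' = {p. fst p = 0}"
    using std unfolding standard_form_def by auto
  have l: "is_line A" "is_line B" "is_line A'" "is_line B'"
    and e4: "A \<inter> B \<inter> A' \<inter> B' = {}"
    and np: "\<not> parallel A B" "\<not> parallel B A'" "\<not> parallel A' B'" "\<not> parallel B' A"
    using q unfolding quadrilateral_def by auto
  define q1 where "q1 = meet A B"
  define q2 where "q2 = meet B A'"
  define q3 where "q3 = meet A' B'"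
  define q4 where "q4 = meet B' A"
  have m1: "q1 \<in> A" "q1 \<in> B" using meet_unique[OF l(1) l(2) np(1)] q1_def by auto
  have m2: "q2 \<in> B" "q2 \<in> A'" using meet_unique[OF l(2) l(3) np(2)] q2_def by auto
  have m3: "q3 \<in> A'" "q3 \<in> B'" using meet_unique[OF l(3) l(4) np(3)] q3_def by auto
  have m4: "q4 \<in> B'" "q4 \<in> A" using meet_unique[OF l(4) l(1) np(4)] q4_def by auto
  define x1 where "x1 = fst q1"
  define y1 where "y1 = snd q2"
  define y2 where "y2 = snd q3"
  define x2 where "x2 = fst q4"
  have Q1: "q1 = (x1,0)" using m1 hA x1_def by (simp add: prod_eq_iff)
  have Q2: "q2 = (0,y1)" using m2 hA' y1_def by (simp add: prod_eq_iff)
  have Q3: "q3 = (0,y2)" using m3 hA' y2_def by (simp add: prod_eq_iff)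
  have Q4: "q4 = (x2,0)" using m4 hA x2_def by (simp add: prod_eq_iff)
  have qv: "quad_vertices A B A' B' = [(x1,0),(0,y1),(0,y2),(x2,0)]"
    unfolding quad_vertices_def using Q1 Q2 Q3 Q4 q1_def q2_def q3_def q4_def by simp
  have four: "(4::'a) \<noteq> 0"
  proof -
    have h: "(2::'a)*2 \<noteq> 0" using char by (metis mult_eq_0_iff)
    have "(4::'a) = 2*2" by simp
    then show ?thesis using h by metis
  qed
  have cen: "centroid A B A' B' = ((x1 + x2)/4, (y1 + y2)/4)"
    unfolding centroid_def qv by simp
  have cz: "centroid A B A' B' = (0,0) \<longleftrightarrow> x1 + x2 = 0 \<and> y1 + y2 = 0"
    unfolding cen using four by simp
  show ?thesis
  proof
    assume "centroid A B A' B' = (0,0)"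
    then have s: "x1 + x2 = 0" "y1 + y2 = 0" using cz by auto
    have o: "(0::'a,0::'a) \<in> A" "(0::'a,0::'a) \<in> A'" using hA hA' by auto
    have x1: "x1 \<noteq> 0"
    proof
      assume "x1 = 0"
      then have "x2 = 0" using s by simp
      then have "(0,0) \<in> B" "(0,0) \<in> B'" using m1 m4 Q1 Q4 \<open>x1 = 0\<close> by auto
      then show False using e4 o by blast
    qed
    have y1: "y1 \<noteq> 0"
    proof
      assume "y1 = 0"
      then have "y2 = 0" using s by simp
      then have "(0,0) \<in> B" "(0,0) \<in> B'" using m2 m3 Q2 Q3 \<open>y1 = 0\<close> by auto
      then show False using e4 o by blast
    qed
    have iu: "1/x1 \<noteq> 0" and iv: "1/y1 \<noteq> 0" using x1 y1 by auto
    note R = rhombus[OF char iu iv]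
    have x2: "x2 = -x1" and y2: "y2 = -y1" using s by (simp_all add: eq_neg_iff_add_eq_0 add.commute)
    have "set (quad_vertices A B A' B') =
      set (quad_vertices (lin (1/x1) (1/y1)) (lin (-(1/x1)) (1/y1)) (lin (-(1/x1)) (-(1/y1))) (lin (1/x1) (-(1/y1))))"
      using R qv x2 y2 by auto
    then show "\<exists>P1 P2 P3 P4 :: ('a \<times> 'a) set. parallelogram P1 P2 P3 P4 \<and>
        set (quad_vertices A B A' B') = set (quad_vertices P1 P2 P3 P4)"
      using R by blast
  next
    assume "\<exists>P1 P2 P3 P4 :: ('a \<times> 'a) set. parallelogram P1 P2 P3 P4 \<and>
        set (quad_vertices A B A' B') = set (quad_vertices P1 P2 P3 P4)"
    then obtain P1 P2 P3 P4 where pg: "parallelogram P1 P2 P3 P4"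
      and st: "set (quad_vertices A B A' B') = set (quad_vertices P1 P2 P3 P4)" by blast
    note G = pgram[OF pg]
    have "set [(x1,0),(0,y1),(0,y2),(x2,(0::'a))] =
      set [meet P1 P2, meet P2 P3, meet P3 P4, meet P4 P1]"
      using st qv unfolding quad_vertices_def by simp
    then have "x1 + x2 = 0 \<and> y1 + y2 = 0" using comb G by blast
    then show "centroid A B A' B' = (0,0)" using cz by simp
  qed
qed

end
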